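(* Model $\mathbb{H}^2\times\mathbb{R}$ as $\{(x_1,x_2,x_3,x_4)\in\mathbb{L}^4:-x_1^2+x_2^2+x_3^2=-1,\ x_1>0\}$. Let $K>0$ be a constant and let $S$ be a complete immersed sphere of revolution about the vertical axis $\{(1,0,0)\}\times\mathbb{R}$ with constant extrinsic curvature $K$, parametrized by $\psi_K(u,v)=(\cosh k(u),\sinh k(u)\cos v,\sinh k(u)\sin v,h(u))$ with generating curve $\alpha(u)=(\cosh k(u),\sinh k(u),0,h(u))$, where $k\ge0$ and the parameter $u$ equals $dk/ds$ for $s$ the arc length of the profile curve (oriented so that $s=0$ is the lowest point). Then $S$ is embedded, and for $-1\le u\le1$, $$k(u)=\cosh^{-1}\exp\!\left(\frac{1-u^2}{2K}\right),\qquad h(u)=-\frac1K\int_1^u\frac{\sqrt{1-w^2}}{\sqrt{1-\exp\!\left(-\frac{1-w^2}{K}\right)}}\,dw+C$$ for some real constant $C$. Moreover, the slice $\mathbb{H}^2\times\{h_0\}$ with $h_0=\frac1K\int_{-1}^0\frac{\sqrt{1-w^2}}{\sqrt{1-\exp(-\frac{1-w^2}{K})}}\,dw+C$ divides $S$ into two symmetric (upper and lower) parts.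
   Context: $\mathbb{L}^4$ is $\mathbb{R}^4$ with the metric $-dx_1^2+dx_2^2+dx_3^2+dx_4^2$; the induced metric on the given submanifold is the product metric of $\mathbb{H}^2\times\mathbb{R}$. The extrinsic curvature of a surface is $K=\det(II)/\det(I)$. *)

theory Defs
  imports "HOL-Analysis.Analysis"
begin

type_synonym R4 = "real \<times> real \<times> real \<times> real"

definition lor :: "R4 \<Rightarrow> R4 \<Rightarrow> real" where
  "lor a b = (case a of (a1,a2,a3,a4) \<Rightarrow> case b of (b1,b2,b3,b4) \<Rightarrow>
              - a1*b1 + a2*b2 + a3*b3 + a4*b4)"

definition H2R :: "R4 set" where
  "H2R = {p. case p of (a1,a2,a3,a4) \<Rightarrow> a2^2 + a3^2 - a1^2 = -1 \<and> a1 > 0}"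

definition x4 :: "R4 \<Rightarrow> real" where "x4 p = snd (snd (snd p))"

text \<open>The H^2-component (x1,x2,x3,0): the unit normal of H^2 x R in L^4 at p;
  a vector X is tangent to H^2 x R at p iff lor X (hpart p) = 0.\<close>
definition hpart :: "R4 \<Rightarrow> R4" where
  "hpart p = (case p of (a1,a2,a3,a4) \<Rightarrow> (a1,a2,a3,0))"

definition d1 :: "(real \<Rightarrow> real \<Rightarrow> R4) \<Rightarrow> real \<Rightarrow> real \<Rightarrow> R4" where
  "d1 \<psi> s v = vector_derivative (\<lambda>t. \<psi> t v) (at s)"
definition d2 :: "(real \<Rightarrow> real \<Rightarrow> R4) \<Rightarrow> real \<Rightarrow> real \<Rightarrow> R4" where
  "d2 \<psi> s v = vector_derivative (\<lambda>t. \<psi> s t) (at v)"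

text \<open>Extrinsic curvature of a parametrized surface psi in H^2 x R at the parameter
  (s,v) equals K: K = det(II)/det(I), where I is the induced (Lorentzian) first
  fundamental form and II is the second fundamental form with respect to a unit normal N
  of the surface tangent to H^2 x R (unique up to sign, so det(II) is independent of
  the choice).\<close>
definition ext_curv_at :: "(real \<Rightarrow> real \<Rightarrow> R4) \<Rightarrow> real \<Rightarrow> real \<Rightarrow> real \<Rightarrow> bool" where
  "ext_curv_at \<psi> s v K \<longleftrightarrow>
     (let E = lor (d1 \<psi> s v) (d1 \<psi> s v);
          F = lor (d1 \<psi> s v) (d2 \<psi> s v);
          G = lor (d2 \<psi> s v) (d2 \<psi> s v)
      in E * G - F^2 \<noteq> 0 \<and>
         (\<exists>N. lor N N = 1 \<and> lor N (d1 \<psi> s v) = 0 \<and> lor N (d2 \<psi> s v) = 0 \<and>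
              lor N (hpart (\<psi> s v)) = 0 \<and>
              (let L = lor (d1 (d1 \<psi>) s v) N;
                   M = lor (d2 (d1 \<psi>) s v) N;
                   P = lor (d2 (d2 \<psi>) s v) N
               in (L * P - M^2) / (E * G - F^2) = K)))"

definition smooth_on :: "real set \<Rightarrow> (real \<Rightarrow> real) \<Rightarrow> bool" where
  "smooth_on U f \<longleftrightarrow> (\<forall>n. \<forall>x\<in>U. (deriv ^^ n) f differentiable (at x))"

definition rot_param :: "(real \<Rightarrow> real) \<Rightarrow> (real \<Rightarrow> real) \<Rightarrow> real \<Rightarrow> real \<Rightarrow> R4" where
  "rot_param k h s v = (cosh (k s), sinh (k s) * cos v, sinh (k s) * sin v, h s)"

definition hint :: "real \<Rightarrow> real \<Rightarrow> real" where
  "hint K w = sqrt (1 - w^2) / sqrt (1 - exp (- (1 - w^2) / K))"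

end

theory Submission
  imports Defs
begin


lemma vd4:
  assumes "(f1 has_real_derivative a) (at x)" "(f2 has_real_derivative b) (at x)"
    "(f3 has_real_derivative c) (at x)" "(f4 has_real_derivative d) (at x)"
  shows "((\<lambda>t. (f1 t, f2 t, f3 t, f4 t)) has_vector_derivative (a,b,c,d)) (at x)"
  using assms by (simp add: has_real_derivative_iff_has_vector_derivative has_vector_derivative_Pair)

lemma smooth_D:
  assumes "smooth_on U f" "x \<in> U"
  shows "(f has_real_derivative deriv f x) (at x)"
    "(deriv f has_real_derivative deriv (deriv f) x) (at x)"
proof -
  have "(deriv ^^ 0) f differentiable (at x)" "(deriv ^^ 1) f differentiable (at x)"
    using assms unfolding smooth_on_def by blast+
  then show "(f has_real_derivative deriv f x) (at x)"
    "(deriv f has_real_derivative deriv (deriv f) x) (at x)"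
    by (simp_all add: DERIV_deriv_iff_real_differentiable)
qed

lemma d1_formula:
  assumes k: "\<And>x. x\<in>U \<Longrightarrow> (k has_real_derivative deriv k x) (at x)"
    and h: "\<And>x. x\<in>U \<Longrightarrow> (h has_real_derivative deriv h x) (at x)"
    and s: "s \<in> U"
  shows "d1 (rot_param k h) s v = (sinh (k s) * deriv k s, cosh (k s) * deriv k s * cos v,
      cosh (k s) * deriv k s * sin v, deriv h s)"
  unfolding d1_def rot_param_def
  apply (rule vector_derivative_at)
  apply (rule vd4)
  apply (auto intro!: derivative_eq_intros k h s)
  done

lemma d2_formula:
  shows "d2 (rot_param k h) s v = (0, - sinh (k s) * sin v, sinh (k s) * cos v, 0)"
  unfolding d2_def rot_param_def
  apply (rule vector_derivative_at)
  apply (rule vd4)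
  apply (auto intro!: derivative_eq_intros)
  done

lemma d2d2_formula:
  shows "d2 (d2 (rot_param k h)) s v = (0, - sinh (k s) * cos v, - sinh (k s) * sin v, 0)"
  unfolding d2_formula
  unfolding d2_def
  apply (rule vector_derivative_at)
  apply (rule vd4)
  apply (auto intro!: derivative_eq_intros)
  done

lemma d2d1_formula:
  assumes k: "\<And>x. x\<in>U \<Longrightarrow> (k has_real_derivative deriv k x) (at x)"
    and h: "\<And>x. x\<in>U \<Longrightarrow> (h has_real_derivative deriv h x) (at x)"
    and s: "s \<in> U"
  shows "d2 (d1 (rot_param k h)) s v = (0, - cosh (k s) * deriv k s * sin v, cosh (k s) * deriv k s * cos v, 0)"
proof -
  have e: "d1 (rot_param k h) s = (\<lambda>v. (sinh (k s) * deriv k s, cosh (k s) * deriv k s * cos v,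
      cosh (k s) * deriv k s * sin v, deriv h s))"
    by (rule ext) (rule d1_formula[OF k h s])
  show ?thesis
  unfolding d2_def e
  apply (rule vector_derivative_at)
  apply (rule vd4)
  apply (auto intro!: derivative_eq_intros)
  done
qed

lemma d1d1_formula:
  assumes k: "\<And>x. x\<in>U \<Longrightarrow> (k has_real_derivative deriv k x) (at x)"
    and h: "\<And>x. x\<in>U \<Longrightarrow> (h has_real_derivative deriv h x) (at x)"
    and k2: "\<And>x. x\<in>U \<Longrightarrow> (deriv k has_real_derivative deriv (deriv k) x) (at x)"
    and h2: "\<And>x. x\<in>U \<Longrightarrow> (deriv h has_real_derivative deriv (deriv h) x) (at x)"
    and s: "s \<in> U" and U: "open U"
  shows "d1 (d1 (rot_param k h)) s v = (cosh (k s) * (deriv k s)^2 + sinh (k s) * deriv (deriv k) s,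
       (sinh (k s) * (deriv k s)^2 + cosh (k s) * deriv (deriv k) s) * cos v,
       (sinh (k s) * (deriv k s)^2 + cosh (k s) * deriv (deriv k) s) * sin v, deriv (deriv h) s)"
proof -
  have "((\<lambda>y. (sinh (k y) * deriv k y, cosh (k y) * deriv k y * cos v,
            cosh (k y) * deriv k y * sin v, deriv h y)) has_vector_derivative
      (cosh (k s) * (deriv k s)^2 + sinh (k s) * deriv (deriv k) s,
       (sinh (k s) * (deriv k s)^2 + cosh (k s) * deriv (deriv k) s) * cos v,
       (sinh (k s) * (deriv k s)^2 + cosh (k s) * deriv (deriv k) s) * sin v,
       deriv (deriv h) s)) (at s)"
    apply (rule vd4)
    apply (auto intro!: derivative_eq_intros k h k2 h2 s simp: power2_eq_square algebra_simps)
    done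
  then have "((\<lambda>y. d1 (rot_param k h) y v) has_vector_derivative
      (cosh (k s) * (deriv k s)^2 + sinh (k s) * deriv (deriv k) s,
       (sinh (k s) * (deriv k s)^2 + cosh (k s) * deriv (deriv k) s) * cos v,
       (sinh (k s) * (deriv k s)^2 + cosh (k s) * deriv (deriv k) s) * sin v,
       deriv (deriv h) s)) (at s)"
    by (rule has_vector_derivative_transform_within_open[OF _ U s]) (simp add: d1_formula[OF k h])
  then show ?thesis unfolding d1_def[of "d1 _"] by (rule vector_derivative_at)
qed


lemma curv_alg:
  fixes na nb nc nd ch sh u g uu gg K L P M E F G :: real
  assumes ch: "ch^2 = sh^2 + 1" "ch > 0" "sh > 0"
    and a3: "nc * sh = 0"
    and a1: "-na*ch + nb* sh = 0"
    and a2: "-na*(sh*u) + nb*(ch*u) + nd*g = 0"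
    and nn: "- (na^2) + nb^2 + nc^2 + nd^2 = 1"
    and ug: "u^2+g^2=1" "u*uu+g*gg=0"
    and L: "L = -na*(ch*u^2+sh*uu) + nb*(sh*u^2+ch*uu) + nd*gg"
    and P: "P = -nb* sh" and M: "M = nc*(ch*u)" and E: "E = 1" and F: "F = 0" and G: "G = sh^2"
    and K: "(L*P - M^2)/(E*G-F^2) = K"
  shows "uu = -K* sh/ch"
proof -
  have nc: "nc = 0" using a3 ch by simp
  define b where "b = nb/ch"
  have nb: "nb = b*ch" using ch unfolding b_def by simp
  have na: "na = b* sh" using a1 ch unfolding nb by (simp add: algebra_simps)
  have d: "ch^2 - sh^2 = 1" using ch(1) by simp
  have e1: "-na*(sh*u) + nb*(ch*u) = b*u*(ch^2-sh^2)" unfolding na nb by (simp add: power2_eq_square algebra_simps)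
  have c1: "b*u + nd*g = 0" using a2 e1 d by simp
  have e2: "- (na^2) + nb^2 = b^2*(ch^2-sh^2)" unfolding na nb by (simp add: power2_eq_square algebra_simps)
  have c2: "b^2+nd^2 = 1" using nn e2 d nc by simp
  have e3: "-na*(ch*u^2+ sh*uu) + nb*(sh*u^2+ch*uu) = b*uu*(ch^2-sh^2)" unfolding na nb by (simp add: power2_eq_square algebra_simps)
  have LL: "L = b*uu + nd*gg" using L e3 d by simp
  have bu: "b*u = - nd*g" using c1 by simp
  have f1: "b^2*u^2 = nd^2*g^2" using bu by (metis power_mult_distrib mult_minus_left power2_minus)
  have bb: "b^2 = g^2"
  proof -
    have "b^2 = b^2*(u^2+g^2)" using ug by simp
    also have "\<dots> = b^2*u^2 + b^2*g^2" by (simp add: algebra_simps)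
    also have "\<dots> = g^2*(nd^2+b^2)" using f1 by (simp add: algebra_simps)
    finally show ?thesis using c2 by (simp add: add.commute)
  qed
  have bn: "b*nd = - u*g"
  proof -
    have "b*nd = b*nd*(u^2+g^2)" using ug by simp
    also have "\<dots> = nd*u*(b*u) - b*g*(- nd*g)" by (simp add: algebra_simps power2_eq_square)
    also have "\<dots> = nd*u*(- nd*g) - b*g*(b*u)" using bu by simp
    also have "\<dots> = - u*g*(nd^2+b^2)" by (simp add: algebra_simps power2_eq_square)
    finally show ?thesis using c2 by (simp add: add.commute)
  qed
  have key: "(b*uu + nd*gg)*b = uu"
  proof -
    have "(b*uu + nd*gg)*b = b^2*uu + (b*nd)*gg" by (simp add: algebra_simps power2_eq_square)
    also have "\<dots> = g^2*uu - u*(g*gg)" using bb bn by simp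
    also have "\<dots> = g^2*uu + u^2*uu"
    proof -
      have "g*gg = - u*uu" using ug(2) by (simp add: eq_neg_iff_add_eq_0 add.commute)
      then show ?thesis by (simp add: power2_eq_square)
    qed
    also have "\<dots> = uu*(u^2+g^2)" by (simp add: algebra_simps)
    also have "\<dots> = uu" using ug(1) by simp
    finally show ?thesis .
  qed
  have "L*P = - ((b*uu + nd*gg)*b) * ch * sh" unfolding P nb LL by (simp add: algebra_simps)
  then have "L*P - M^2 = - uu * ch * sh" unfolding M nc key by simp
  then have "- uu * ch * sh / sh^2 = K" using K E F G by simp
  then have "- uu * ch / sh = K" using ch by (simp add: power2_eq_square)
  then show ?thesis using ch by (auto simp: field_simps)
qed


lemma hint_even: "hint K (-w) = hint K w"
  unfolding hint_def by simp

lemma hint_nonneg: assumes "K > 0" "\<bar>w\<bar> \<le> 1" shows "hint K w \<ge> 0"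
proof -
  have t: "1 - w^2 \<ge> 0" using assms(2) by (simp add: abs_square_le_1)
  have "- (1 - w^2) / K \<le> 0" using t assms(1) by (simp add: divide_nonpos_pos)
  then have "exp (- (1 - w^2) / K) \<le> 1" by simp
  then show ?thesis unfolding hint_def using t by simp
qed

lemma hint_bound: assumes K: "K > 0" and w: "\<bar>w\<bar> \<le> 1" shows "hint K w \<le> sqrt (K+1)"
proof (cases "w^2 = 1")
  case True then show ?thesis unfolding hint_def using K by simp
next
  case False
  define t where "t = 1 - w^2"
  have t0: "t > 0" "t \<le> 1" using w False unfolding t_def by (auto simp: abs_square_le_1 less_le)
  have "exp (t/K) \<ge> 1 + t/K" by (rule exp_ge_add_one_self)
  then have e: "exp (- t/K) \<le> 1/(1+t/K)" using K t0
    by (simp add: exp_minus divide_simps mult.commute)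
  have "1/(1+t/K) = K/(K+t)" using K t0 by (simp add: field_simps)
  then have d: "1 - exp (-t/K) \<ge> t/(K+t)" using e K t0 by (simp add: field_simps)
  have dp: "t/(K+t) > 0" using K t0 by simp
  have d2: "1 - exp (-t/K) > 0" using d dp by linarith
  have "t \<le> (K+t) * (1 - exp (-t/K))" using d K t0 by (simp add: pos_divide_le_eq mult.commute)
  then have "t / (1 - exp (-t/K)) \<le> K + t" using d2 by (simp add: pos_divide_le_eq)
  then have "t / (1 - exp (-t/K)) \<le> K + 1" using t0 by simp
  then have "sqrt (t / (1 - exp (-t/K))) \<le> sqrt (K+1)" by simp
  moreover have "hint K w = sqrt (t / (1 - exp (-t/K)))"
    unfolding hint_def t_def[symmetric] by (simp add: real_sqrt_divide)
  ultimately show ?thesis by simp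
qed

lemma hint_meas[measurable]: "hint K \<in> borel_measurable borel"
  unfolding hint_def by measurable

lemma hint_cont: assumes K: "K > 0" shows "continuous_on {-1<..<1} (hint K)"
proof -
  have "1 - exp (- (1 - w^2) / K) \<noteq> 0" if "w \<in> {-1<..<1}" for w
  proof -
    have "w^2 < 1" using that by (simp add: abs_square_less_1 abs_less_iff)
    then have "- (1 - w^2) / K < 0" using K by (simp add: divide_neg_pos)
    then have "exp (- (1 - w^2) / K) < 1" by simp
    then show ?thesis by linarith
  qed
  then show ?thesis unfolding hint_def
    by (intro continuous_intros) auto
qed

lemma hint_set_integrable: assumes K: "K > 0" and ab: "-1 \<le> a" "b \<le> 1"
  shows "set_integrable lborel {a..b} (hint K)"
  unfolding set_integrable_def
proof (rule integrableI_bounded_set[where A="{a..b}" and B="sqrt (K+1)"])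
  show "AE x in lborel. x \<in> {a..b} \<longrightarrow> norm (indicat_real {a..b} x *\<^sub>R hint K x) \<le> sqrt (K + 1)"
    using hint_bound[OF K] hint_nonneg[OF K] ab by (auto simp: indicator_def)
  show "emeasure lborel {a..b} < \<infinity>" by (cases "a \<le> b") auto
qed (auto simp: indicator_def)

lemma hint_integrable_on: assumes K: "K > 0" and ab: "-1 \<le> a" "b \<le> 1"
  shows "hint K integrable_on {a..b}"
  using set_borel_integral_eq_integral(1)[OF hint_set_integrable[OF assms]] .

lemma hint_LBINT: assumes K: "K > 0" and x: "-1 \<le> x" "x \<le> 1"
  shows "(LBINT w=ereal 1..ereal x. hint K w) = - integral {x..1} (hint K)"
  by (subst interval_integral_endpoints_reverse)
     (simp add: interval_integral_eq_integral[OF x(2) hint_set_integrable[OF K x(1) order.refl]])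

lemma hint_LBINT2: assumes K: "K > 0"
  shows "(LBINT w=ereal (-1)..ereal 0. hint K w) = integral {-1..0} (hint K)"
  by (rule interval_integral_eq_integral[OF _ hint_set_integrable[OF K order.refl]]) auto

lemma Gi_cont: assumes K: "K > 0"
  shows "continuous_on {-1..1} (\<lambda>x. integral {x..1} (hint K))"
  by (rule indefinite_integral_continuous_1'[OF hint_integrable_on[OF K order.refl order.refl]])

lemma Gi_deriv: assumes K: "K > 0" and x: "-1 < x" "x < 1"
  shows "((\<lambda>x. integral {x..1} (hint K)) has_real_derivative - hint K x) (at x)"
proof -
  have I: "hint K integrable_on {-1..1}" by (rule hint_integrable_on[OF K]) auto
  have c: "continuous (at x within {-1..1}) (hint K)"
  proof -
    have "continuous (at x) (hint K)"
      using hint_cont[OF K] x by (simp add: continuous_on_eq_continuous_at)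
    then show ?thesis by (rule continuous_at_imp_continuous_within)
  qed
  have "((\<lambda>u. integral {-1..u} (hint K)) has_vector_derivative hint K x) (at x within ({-1..1} - {}))"
    by (rule integral_has_vector_derivative_continuous_at[OF I]) (use x c in auto)
  then have D: "((\<lambda>u. integral {-1..u} (hint K)) has_real_derivative hint K x) (at x)"
    using x by (simp add: at_within_Icc_at has_real_derivative_iff_has_vector_derivative)
  have "((\<lambda>u. integral {-1..1} (hint K) - integral {-1..u} (hint K)) has_real_derivative - hint K x) (at x)"
    using D by (auto intro!: derivative_eq_intros)
  then show ?thesis
  proof (rule has_field_derivative_transform_within_open[where S="{-1<..<1}"])
    fix y :: real assume "y \<in> {-1<..<1}"
    then show "integral {- 1..1} (hint K) - integral {- 1..y} (hint K) = integral {y..1} (hint K)"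
      using Henstock_Kurzweil_Integration.integral_combine[OF _ _ I, of y] by auto
  qed (use x in auto)
qed

lemma Gi_sym: assumes K: "K > 0" and x: "-1 \<le> x" "x \<le> 1"
  shows "integral {x..1} (hint K) + integral {-x..1} (hint K) = 2 * integral {-1..0} (hint K)"
proof -
  have I: "hint K integrable_on {-1..1}" by (rule hint_integrable_on[OF K]) auto
  have r: "integral {-b..-a} (hint K) = integral {a..b} (hint K)" for a b
    using Henstock_Kurzweil_Integration.integral_reflect_real[of b a "hint K"] by (simp add: hint_even)
  have "integral {-x..1} (hint K) = integral {-1..x} (hint K)" using r[where a="-x" and b=1] by simp
  moreover have "integral {-1..x} (hint K) + integral {x..1} (hint K) = integral {-1..1} (hint K)"
    using Henstock_Kurzweil_Integration.integral_combine[OF x I] .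
  moreover have "integral {-1..0} (hint K) + integral {0..1} (hint K) = integral {-1..1} (hint K)"
    using Henstock_Kurzweil_Integration.integral_combine[OF _ _ I] by simp
  moreover have "integral {0..1} (hint K) = integral {-1..0} (hint K)" using r[where a=0 and b=1] by simp
  ultimately show ?thesis by linarith
qed



theorem proposition5p1:
  fixes K L :: real and k h :: "real \<Rightarrow> real" and U :: "real set"
  defines "\<psi> \<equiv> rot_param k h"
  defines "S \<equiv> (\<lambda>(s,v). rot_param k h s v) ` ({0..L} \<times> UNIV)"
  assumes Kpos: "K > 0"
    and Lpos: "L > 0"
    and U: "open U" "{0..L} \<subseteq> U"
    and smooth: "smooth_on U k" "smooth_on U h"
    \<comment> \<open>s is arc length of the generating curve alpha(s) = psi(s,0)\<close>
    and arclen: "\<forall>s\<in>{0..L}. lor (vector_derivative (\<lambda>t. \<psi> t 0) (at s))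
                                  (vector_derivative (\<lambda>t. \<psi> t 0) (at s)) = 1"
    \<comment> \<open>sphere of revolution: the profile runs from the axis back to the axis,
        meeting it orthogonally (smooth closing at the poles)\<close>
    and poles: "k 0 = 0" "k L = 0" "deriv h 0 = 0" "deriv h L = 0"
    and kpos: "\<forall>s\<in>{0<..<L}. k s > 0"
    \<comment> \<open>s = 0 is the lowest point\<close>
    and lowest: "\<forall>s\<in>{0..L}. h 0 \<le> h s"
    \<comment> \<open>constant extrinsic curvature K\<close>
    and curv: "\<forall>s\<in>{0<..<L}. \<forall>v. ext_curv_at \<psi> s v K"
  shows
    \<comment> \<open>S is embedded\<close>
    "(\<forall>s\<in>{0..L}. \<forall>s'\<in>{0..L}. \<forall>v v'. \<psi> s v = \<psi> s' v' \<longrightarrow>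
        s = s' \<and> (s = 0 \<or> s = L \<or> (\<exists>m::int. v' = v + 2 * pi * of_int m)))
     \<and> bij_betw (deriv k) {0..L} {-1..1}
     \<and> (\<forall>s\<in>{0..L}. k s = arcosh (exp ((1 - (deriv k s)^2) / (2 * K))))
     \<and> (\<exists>C. (\<forall>s\<in>{0..L}. h s = - (1 / K) * (LBINT w=ereal 1..ereal (deriv k s). hint K w) + C)
          \<and> (let h0 = (1 / K) * (LBINT w=ereal (-1)..ereal 0. hint K w) + C
             in (\<lambda>(y1,y2,y3,y4). (y1, y2, y3, 2 * h0 - y4)) ` {p\<in>S. x4 p \<ge> h0}
                  = {p\<in>S. x4 p \<le> h0}))"
proof -
  define u where "u = deriv k"
  define g where "g = deriv h"
  define u2 where "u2 = deriv u"
  define g2 where "g2 = deriv g"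
  have U0: "x \<in> U" if "x \<in> {0..L}" for x using U(2) that by auto
  have kD: "(k has_real_derivative u x) (at x)" if "x \<in> U" for x
    unfolding u_def by (rule smooth_D(1)[OF smooth(1) that])
  have uD: "(u has_real_derivative u2 x) (at x)" if "x \<in> U" for x
    unfolding u2_def u_def by (rule smooth_D(2)[OF smooth(1) that])
  have hD: "(h has_real_derivative g x) (at x)" if "x \<in> U" for x
    unfolding g_def by (rule smooth_D(1)[OF smooth(2) that])
  have gD: "(g has_real_derivative g2 x) (at x)" if "x \<in> U" for x
    unfolding g2_def g_def by (rule smooth_D(2)[OF smooth(2) that])
  have contk: "continuous_on {0..L} k"
    by (rule continuous_at_imp_continuous_on) (use kD U0 DERIV_isCont in blast)
  have contu: "continuous_on {0..L} u"
    by (rule continuous_at_imp_continuous_on) (use uD U0 DERIV_isCont in blast)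
  have conth: "continuous_on {0..L} h"
    by (rule continuous_at_imp_continuous_on) (use hD U0 DERIV_isCont in blast)
  have contg: "continuous_on {0..L} g"
    by (rule continuous_at_imp_continuous_on) (use gD U0 DERIV_isCont in blast)
  have kD': "\<And>x. x\<in>U \<Longrightarrow> (k has_real_derivative deriv k x) (at x)" using kD u_def by simp
  have hD': "\<And>x. x\<in>U \<Longrightarrow> (h has_real_derivative deriv h x) (at x)" using hD g_def by simp
  have uD': "\<And>x. x\<in>U \<Longrightarrow> (deriv k has_real_derivative deriv (deriv k) x) (at x)"
    using uD u_def u2_def by simp
  have gD': "\<And>x. x\<in>U \<Longrightarrow> (deriv h has_real_derivative deriv (deriv h) x) (at x)"
    using gD g_def g2_def by simp
  have d1f: "d1 \<psi> s v = (sinh (k s) * u s, cosh (k s) * u s * cos v, cosh (k s) * u s * sin v, g s)"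
    if "s \<in> U" for s v
    unfolding \<psi>_def u_def g_def by (rule d1_formula[OF kD' hD' that])
  have ug: "u s ^ 2 + g s ^ 2 = 1" if s: "s \<in> {0..L}" for s
  proof -
    have "lor (d1 \<psi> s 0) (d1 \<psi> s 0) = 1" using arclen s unfolding d1_def by blast
    then have "- ((sinh (k s) * u s)^2) + (cosh (k s) * u s)^2 + (g s)^2 = 1"
      unfolding d1f[OF U0[OF s]] by (simp add: lor_def power2_eq_square)
    then show ?thesis by (simp add: power_mult_distrib cosh_square_eq algebra_simps)
  qed
  have ug2: "u s * u2 s + g s * g2 s = 0" if s: "s \<in> {0<..<L}" for s
  proof -
    have sU: "s \<in> U" using s U0 by auto
    have D1: "((\<lambda>t. u t ^ 2 + g t ^ 2) has_real_derivative 2 * u s * u2 s + 2 * g s * g2 s) (at s)"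
      by (auto intro!: derivative_eq_intros uD[OF sU] gD[OF sU])
    have D0: "((\<lambda>t. u t ^ 2 + g t ^ 2) has_real_derivative 0) (at s)"
    proof (rule has_field_derivative_transform_within_open[where S="{0<..<L}"])
      show "((\<lambda>t. 1) has_real_derivative 0) (at s)" by simp
    qed (use s ug in auto)
    from DERIV_unique[OF D1 D0] show ?thesis by simp
  qed
  have u2eq: "u2 s = - K * sinh (k s) / cosh (k s)" if s: "s \<in> {0<..<L}" for s
  proof -
    have sU: "s \<in> U" using s U0 by auto
    have kp: "k s > 0" using kpos s by auto
    from curv s have "ext_curv_at \<psi> s 0 K" by blast
    then obtain N where N: "lor N N = 1" "lor N (d1 \<psi> s 0) = 0" "lor N (d2 \<psi> s 0) = 0"
      "lor N (hpart (\<psi> s 0)) = 0"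
      "(lor (d1 (d1 \<psi>) s 0) N * lor (d2 (d2 \<psi>) s 0) N - (lor (d2 (d1 \<psi>) s 0) N)^2) /
       (lor (d1 \<psi> s 0) (d1 \<psi> s 0) * lor (d2 \<psi> s 0) (d2 \<psi> s 0) - (lor (d1 \<psi> s 0) (d2 \<psi> s 0))^2) = K"
      unfolding ext_curv_at_def Let_def by blast
    obtain n1 n2 n3 n4 where Ne: "N = (n1,n2,n3,n4)" by (cases N) auto
    have E: "lor (d1 \<psi> s 0) (d1 \<psi> s 0) = 1" using arclen s unfolding d1_def by auto
    have d2e: "d2 \<psi> s 0 = (0, 0, sinh (k s), 0)" unfolding \<psi>_def d2_formula by simp
    have d2d2e: "d2 (d2 \<psi>) s 0 = (0, - sinh (k s), 0, 0)" unfolding \<psi>_def d2d2_formula by simp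
    have d2d1e: "d2 (d1 \<psi>) s 0 = (0, 0, cosh (k s) * u s, 0)"
      using d2d1_formula[OF kD' hD' sU, of 0] unfolding \<psi>_def u_def by simp
    have d1d1e: "d1 (d1 \<psi>) s 0 = (cosh (k s) * (u s)^2 + sinh (k s) * u2 s,
       sinh (k s) * (u s)^2 + cosh (k s) * u2 s, 0, g2 s)"
      using d1d1_formula[OF kD' hD' uD' gD' sU U(1), of 0] unfolding \<psi>_def u_def u2_def g_def g2_def by simp
    have d1e: "d1 \<psi> s 0 = (sinh (k s) * u s, cosh (k s) * u s, 0, g s)"
      using d1f[OF sU, of 0] by simp
    have hp: "hpart (\<psi> s 0) = (cosh (k s), sinh (k s), 0, 0)"
      unfolding \<psi>_def rot_param_def hpart_def by simp
    show ?thesis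
    proof (rule curv_alg[where na=n1 and nb=n2 and nc=n3 and nd=n4 and g="g s" and gg="g2 s"
          and L="lor (d1 (d1 \<psi>) s 0) N" and P="lor (d2 (d2 \<psi>) s 0) N" and M="lor (d2 (d1 \<psi>) s 0) N"
          and E="lor (d1 \<psi> s 0) (d1 \<psi> s 0)" and G="lor (d2 \<psi> s 0) (d2 \<psi> s 0)"
          and F="lor (d1 \<psi> s 0) (d2 \<psi> s 0)"])
      show "(cosh (k s))^2 = (sinh (k s))^2 + 1" by (rule cosh_square_eq)
      show "cosh (k s) > 0" "sinh (k s) > 0" using kp by auto
      show "n3 * sinh (k s) = 0" using N(3) unfolding d2e Ne by (simp add: lor_def)
      show "- n1 * cosh (k s) + n2 * sinh (k s) = 0" using N(4) unfolding hp Ne by (simp add: lor_def)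
      show "- n1 * (sinh (k s) * u s) + n2 * (cosh (k s) * u s) + n4 * g s = 0"
        using N(2) unfolding d1e Ne by (simp add: lor_def)
      show "- (n1^2) + n2^2 + n3^2 + n4^2 = 1" using N(1) unfolding Ne by (simp add: lor_def power2_eq_square)
      show "u s ^ 2 + g s ^ 2 = 1" using ug s by auto
      show "u s * u2 s + g s * g2 s = 0" by (rule ug2[OF s])
      show "lor (d1 (d1 \<psi>) s 0) N = - n1 * (cosh (k s) * (u s)^2 + sinh (k s) * u2 s)
         + n2 * (sinh (k s) * (u s)^2 + cosh (k s) * u2 s) + n4 * g2 s"
        unfolding d1d1e Ne by (simp add: lor_def algebra_simps)
      show "lor (d2 (d2 \<psi>) s 0) N = - n2 * sinh (k s)" unfolding d2d2e Ne by (simp add: lor_def)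
      show "lor (d2 (d1 \<psi>) s 0) N = n3 * (cosh (k s) * u s)" unfolding d2d1e Ne by (simp add: lor_def)
      show "lor (d1 \<psi> s 0) (d1 \<psi> s 0) = 1" by (rule E)
      show "lor (d1 \<psi> s 0) (d2 \<psi> s 0) = 0" unfolding d1e d2e by (simp add: lor_def)
      show "lor (d2 \<psi> s 0) (d2 \<psi> s 0) = (sinh (k s))^2" unfolding d2e by (simp add: lor_def power2_eq_square)
      show "(lor (d1 (d1 \<psi>) s 0) N * lor (d2 (d2 \<psi>) s 0) N - (lor (d2 (d1 \<psi>) s 0) N)\<^sup>2) /
       (lor (d1 \<psi> s 0) (d1 \<psi> s 0) * lor (d2 \<psi> s 0) (d2 \<psi> s 0) - (lor (d1 \<psi> s 0) (d2 \<psi> s 0))\<^sup>2) = K"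
        by (rule N(5))
    qed
  qed
  have u2neg: "u2 x < 0" if "x \<in> {0<..<L}" for x
  proof -
    have "k x > 0" using kpos that by auto
    then have "K * sinh (k x) / cosh (k x) > 0" using Kpos by simp
    then show ?thesis using u2eq[OF that] by simp
  qed
  have udec: "u b < u a" if ab: "a < b" "a \<in> {0..L}" "b \<in> {0..L}" for a b
  proof (rule DERIV_neg_imp_decreasing_open[OF ab(1)])
    fix x assume x: "a < x" "x < b"
    then have "x \<in> {0<..<L}" using ab by auto
    then show "\<exists>y. (u has_real_derivative y) (at x) \<and> y < 0"
      using uD U0 u2neg by (meson greaterThanLessThan_iff atLeastAtMost_iff less_imp_le)
  next
    show "continuous_on {a..b} u" by (rule continuous_on_subset[OF contu]) (use ab in auto)
  qed
  have u0: "u 0 = 1" and uL: "u L = -1"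
  proof -
    have "u 0 ^ 2 = 1" using ug[of 0] Lpos poles(3) g_def by simp
    then have a: "u 0 = 1 \<or> u 0 = -1" by (simp add: power2_eq_1_iff)
    have "u L ^ 2 = 1" using ug[of L] Lpos poles(4) g_def by simp
    then have b: "u L = 1 \<or> u L = -1" by (simp add: power2_eq_1_iff)
    have "u L < u 0" using udec[of 0 L] Lpos by auto
    then show "u 0 = 1" "u L = -1" using a b by auto
  qed
  have urange: "u s \<in> {-1..1}" if "s \<in> {0..L}" for s
  proof -
    have "u s \<le> 1" using udec[of 0 s] that u0 by (cases "s = 0") auto
    moreover have "u s \<ge> -1" using udec[of s L] that uL by (cases "s = L") auto
    ultimately show ?thesis by auto
  qed
  have urange': "u s \<in> {-1<..<1}" if "s \<in> {0<..<L}" for s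
    using udec[of 0 s] udec[of s L] that u0 uL by auto
  have bij: "bij_betw u {0..L} {-1..1}"
    unfolding bij_betw_def
  proof
    show "inj_on u {0..L}"
    proof (rule inj_onI)
      fix x y assume "x \<in> {0..L}" "y \<in> {0..L}" "u x = u y"
      then show "x = y" using udec[of x y] udec[of y x] by (cases x y rule: linorder_cases) auto
    qed
    show "u ` {0..L} = {-1..1}"
    proof
      show "u ` {0..L} \<subseteq> {-1..1}" using urange by auto
      show "{-1..1} \<subseteq> u ` {0..L}"
      proof
        fix y :: real assume "y \<in> {-1..1}"
        then have "u L \<le> y" "y \<le> u 0" using u0 uL by auto
        from IVT2'[OF this _ contu] Lpos obtain x where "0 \<le> x" "x \<le> L" "u x = y" by auto
        then show "y \<in> u ` {0..L}" by force
      qed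
    qed
  qed
  have coshf: "cosh (k s) = exp ((1 - (u s)^2) / (2 * K))" if s: "s \<in> {0..L}" for s
  proof -
    define Fn where "Fn t = ln (cosh (k t)) + (u t)^2 / (2 * K)" for t
    have "Fn s = Fn 0"
    proof (cases "s = 0")
      case False
      then have s0: "0 < s" using s by auto
      show ?thesis
      proof (rule DERIV_isconst_end[OF s0])
        show "continuous_on {0..s} Fn" unfolding Fn_def
          using Kpos continuous_on_subset[OF contk, of "{0..s}"] continuous_on_subset[OF contu, of "{0..s}"] s
          by (auto intro!: continuous_intros simp: cosh_real_pos)
      next
        fix x assume x: "0 < x" "x < s"
        then have xi: "x \<in> {0<..<L}" using s by auto
        then have xU: "x \<in> U" using U0 by auto
        have "(Fn has_real_derivative (sinh (k x) / cosh (k x)) * u x + 2 * u x * u2 x / (2 * K)) (at x)"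
          unfolding Fn_def
          using Kpos by (auto intro!: derivative_eq_intros kD[OF xU] uD[OF xU] simp: cosh_real_pos)
        moreover have "(sinh (k x) / cosh (k x)) * u x + 2 * u x * u2 x / (2 * K) = 0"
        proof -
          have e: "u2 x * cosh (k x) = - (K * sinh (k x))" using u2eq[OF xi] by (simp add: field_simps)
          have "K * (u x * sinh (k x)) + u2 x * (u x * cosh (k x)) = u x * (K * sinh (k x) + u2 x * cosh (k x))"
            by (simp add: algebra_simps)
          also have "\<dots> = 0" using e by simp
          finally have "K * (u x * sinh (k x)) + u2 x * (u x * cosh (k x)) = 0" .
          then show ?thesis using Kpos by (simp add: field_simps)
        qed
        ultimately show "(Fn has_real_derivative 0) (at x)" by simp
      qed
    qed simp
    moreover have "Fn 0 = 1 / (2 * K)" unfolding Fn_def using u0 poles(1) by simp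
    ultimately have "ln (cosh (k s)) + (u s)^2 / (2 * K) = 1 / (2 * K)"
      unfolding Fn_def by simp
    then have "ln (cosh (k s)) = 1 / (2 * K) - (u s)^2 / (2 * K)" by linarith
    then have "ln (cosh (k s)) = (1 - (u s)^2) / (2 * K)" by (simp add: diff_divide_distrib)
    then show ?thesis by (metis cosh_real_pos exp_ln)
  qed
  have k_nonneg: "k s \<ge> 0" if "s \<in> {0..L}" for s
    using kpos poles that by (cases "s = 0 \<or> s = L") (auto simp: less_imp_le)
  have kform: "k s = arcosh (exp ((1 - (u s)^2) / (2 * K)))" if "s \<in> {0..L}" for s
    using coshf[OF that] arcosh_cosh_real[OF k_nonneg[OF that]] by simp
  have gsq: "(g x)^2 = 1 - (u x)^2" if "x \<in> {0..L}" for x using ug[OF that] by simp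
  have gne: "g x \<noteq> 0" if x: "x \<in> {0<..<L}" for x
  proof -
    have "(u x)^2 < 1" using urange'[OF x] by (simp add: abs_square_less_1 abs_less_iff)
    then show ?thesis using gsq[of x] x by auto
  qed
  have gpos: "g x > 0" if x: "x \<in> {0<..<L}" for x
  proof (rule ccontr)
    assume "\<not> g x > 0"
    then have gx: "g x < 0" using gne[OF x] by linarith
    have neg: "g y < 0" if y: "0 < y" "y \<le> x" for y
    proof (rule ccontr)
      assume "\<not> g y < 0"
      then have gy: "g y \<ge> 0" by simp
      have "y < x" using y gx gy by (cases "y = x") auto
      have "continuous_on {y..x} g" by (rule continuous_on_subset[OF contg]) (use y x in auto)
      from IVT2'[of g x 0 y, OF _ gy _ this] gx \<open>y < x\<close>
      obtain z where "y \<le> z" "z \<le> x" "g z = 0" by auto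
      then show False using gne[of z] y x by auto
    qed
    have "h x < h 0"
    proof (rule DERIV_neg_imp_decreasing_open[of 0 x h])
      show "0 < x" using x by simp
      show "continuous_on {0..x} h" by (rule continuous_on_subset[OF conth]) (use x in auto)
      fix y assume "0 < y" "y < x"
      then show "\<exists>d. (h has_real_derivative d) (at y) \<and> d < 0"
        using hD[of y] U0[of y] neg[of y] x by auto
    qed
    then show False using lowest x by (metis atLeastAtMost_iff greaterThanLessThan_iff less_imp_le not_le)
  qed
  have gform: "g s = sqrt (1 - (u s)^2)" if s: "s \<in> {0..L}" for s
  proof (cases "s = 0 \<or> s = L")
    case True
    then show ?thesis using poles(3,4) u0 uL g_def by auto
  next
    case False
    then have "s \<in> {0<..<L}" using s by auto
    then show ?thesis using gpos gsq s by (intro real_sqrt_unique[symmetric]) (auto simp: less_imp_le)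
  qed
  have hinc: "h a < h b" if ab: "a < b" "a \<in> {0..L}" "b \<in> {0..L}" for a b
  proof (rule DERIV_pos_imp_increasing_open[OF ab(1)])
    fix x assume x: "a < x" "x < b"
    then have "x \<in> {0<..<L}" using ab by auto
    then show "\<exists>y. (h has_real_derivative y) (at x) \<and> y > 0"
      using hD U0 gpos by (meson greaterThanLessThan_iff atLeastAtMost_iff less_imp_le)
  next
    show "continuous_on {a..b} h" by (rule continuous_on_subset[OF conth]) (use ab in auto)
  qed
  define Gi where "Gi x = integral {x..1} (hint K)" for x
  have hintid: "hint K (u x) = g x * cosh (k x) / sinh (k x)" if x: "x \<in> {0<..<L}" for x
  proof -
    have xL: "x \<in> {0..L}" using x by auto
    have kp: "k x > 0" using kpos x by auto
    define a where "a = (1 - (u x)^2) / (2 * K)"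
    have ca: "cosh (k x) = exp a" using coshf[OF xL] a_def by simp
    have "- (1 - (u x)^2) / K = - (2 * a)" unfolding a_def using Kpos by (simp add: field_simps)
    then have "exp (- (1 - (u x)^2) / K) = inverse ((cosh (k x))^2)"
      using ca by (simp add: exp_minus exp_double)
    then have "1 - exp (- (1 - (u x)^2) / K) = 1 - inverse ((cosh (k x))^2)" by simp
    also have "\<dots> = ((cosh (k x))^2 - 1) / (cosh (k x))^2"
      by (simp add: field_simps)
    also have "\<dots> = (sinh (k x))^2 / (cosh (k x))^2" by (simp add: cosh_square_eq)
    finally have "1 - exp (- (1 - (u x)^2) / K) = (sinh (k x))^2 / (cosh (k x))^2" .
    then have "sqrt (1 - exp (- (1 - (u x)^2) / K)) = sinh (k x) / cosh (k x)"
      using kp by (simp add: real_sqrt_divide less_imp_le)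
    then show ?thesis unfolding hint_def using gform[OF xL] by simp
  qed
  have hform: "h s = (1 / K) * Gi (u s) + h 0" if s: "s \<in> {0..L}" for s
  proof -
    define Hf where "Hf t = h t - (1 / K) * Gi (u t)" for t
    have "Hf s = Hf 0"
    proof (cases "s = 0")
      case False
      then have s0: "0 < s" using s by auto
      show ?thesis
      proof (rule DERIV_isconst_end[OF s0])
        have cu: "continuous_on {0..s} u" by (rule continuous_on_subset[OF contu]) (use s in auto)
        have "continuous_on {0..s} (\<lambda>t. Gi (u t))"
          by (rule continuous_on_compose2[OF Gi_cont[OF Kpos, folded Gi_def] cu]) (use s urange in auto)
        moreover have "continuous_on {0..s} h" by (rule continuous_on_subset[OF conth]) (use s in auto)
        ultimately show "continuous_on {0..s} Hf" unfolding Hf_def by (intro continuous_intros)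
      next
        fix x assume x: "0 < x" "x < s"
        then have xi: "x \<in> {0<..<L}" using s by auto
        then have xU: "x \<in> U" using U0 by auto
        have ux: "-1 < u x" "u x < 1" using urange'[OF xi] by auto
        have DG: "((\<lambda>t. Gi (u t)) has_real_derivative (- hint K (u x)) * u2 x) (at x)"
          by (rule DERIV_chain2[OF Gi_deriv[OF Kpos ux, folded Gi_def] uD[OF xU]])
        have "(Hf has_real_derivative g x - (1 / K) * ((- hint K (u x)) * u2 x)) (at x)"
          unfolding Hf_def by (intro derivative_intros hD[OF xU] DG DERIV_cmult)
        moreover have "g x - (1 / K) * ((- hint K (u x)) * u2 x) = 0"
        proof -
          have sp: "sinh (k x) > 0" using kpos xi by auto
          have "(1 / K) * ((- hint K (u x)) * u2 x) = (1 / K) * ((g x * cosh (k x) / sinh (k x)) * (K * sinh (k x) / cosh (k x)))"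
            using hintid[OF xi] u2eq[OF xi] by simp
          also have "\<dots> = g x" using Kpos sp by (simp add: field_simps)
          finally show ?thesis by simp
        qed
        ultimately show "(Hf has_real_derivative 0) (at x)" by simp
      qed
    qed simp
    moreover have "Gi (u 0) = 0" unfolding Gi_def using u0 by simp
    ultimately show ?thesis unfolding Hf_def by simp
  qed
  define I0 where "I0 = integral {-1..0} (hint K)"
  define H0 where "H0 = (1 / K) * I0 + h 0"
  have refl: "\<exists>s'\<in>{0..L}. k s' = k s \<and> h s' = 2 * H0 - h s" if s: "s \<in> {0..L}" for s
  proof -
    have "- u s \<in> {-1..1}" using urange[OF s] by auto
    then obtain s' where s': "s' \<in> {0..L}" "u s' = - u s"
      using bij unfolding bij_betw_def by (metis imageE)
    have "k s' = k s" using kform[OF s'(1)] kform[OF s] s'(2) by simp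
    moreover have "h s' = 2 * H0 - h s"
    proof -
      have "Gi (u s) + Gi (- u s) = 2 * I0"
        unfolding Gi_def I0_def using Gi_sym[OF Kpos] urange[OF s] by auto
      then have e: "Gi (- u s) = 2 * I0 - Gi (u s)" by linarith
      have "h s' = (1 / K) * (2 * I0 - Gi (u s)) + h 0" using hform[OF s'(1)] s'(2) e by simp
      then show ?thesis using hform[OF s] unfolding H0_def by (simp add: algebra_simps)
    qed
    ultimately show ?thesis using s' by blast
  qed
  have Sm: "p \<in> S \<longleftrightarrow> (\<exists>s v. s \<in> {0..L} \<and> p = rot_param k h s v)" for p
    unfolding S_def by force
  have symm: "(\<lambda>(y1,y2,y3,y4). (y1, y2, y3, 2 * H0 - y4)) ` {p\<in>S. x4 p \<ge> H0} = {p\<in>S. x4 p \<le> H0}"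
  proof
    show "(\<lambda>(y1,y2,y3,y4). (y1, y2, y3, 2 * H0 - y4)) ` {p\<in>S. x4 p \<ge> H0} \<subseteq> {p\<in>S. x4 p \<le> H0}"
    proof
      fix q assume "q \<in> (\<lambda>(y1,y2,y3,y4). (y1, y2, y3, 2 * H0 - y4)) ` {p\<in>S. x4 p \<ge> H0}"
      then obtain p where p: "p \<in> S" "x4 p \<ge> H0" "q = (\<lambda>(y1,y2,y3,y4). (y1, y2, y3, 2 * H0 - y4)) p"
        by blast
      then obtain s v where sv: "s \<in> {0..L}" "p = rot_param k h s v" using Sm by blast
      obtain s' where s': "s' \<in> {0..L}" "k s' = k s" "h s' = 2 * H0 - h s" using refl[OF sv(1)] by blast
      have "q = rot_param k h s' v" using p(3) sv(2) s' by (simp add: rot_param_def)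
      moreover have "x4 q \<le> H0" using p(2) sv(2) s' \<open>q = rot_param k h s' v\<close>
        by (simp add: rot_param_def x4_def)
      ultimately show "q \<in> {p\<in>S. x4 p \<le> H0}" using Sm s'(1) by blast
    qed
    show "{p\<in>S. x4 p \<le> H0} \<subseteq> (\<lambda>(y1,y2,y3,y4). (y1, y2, y3, 2 * H0 - y4)) ` {p\<in>S. x4 p \<ge> H0}"
    proof
      fix p assume p: "p \<in> {p\<in>S. x4 p \<le> H0}"
      then obtain s v where sv: "s \<in> {0..L}" "p = rot_param k h s v" using Sm by blast
      obtain s' where s': "s' \<in> {0..L}" "k s' = k s" "h s' = 2 * H0 - h s" using refl[OF sv(1)] by blast
      have hs: "h s \<le> H0" using p sv(2) by (simp add: rot_param_def x4_def)
      have "rot_param k h s' v \<in> S" using Sm s'(1) by blast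
      moreover have "x4 (rot_param k h s' v) \<ge> H0" using s'(3) hs by (simp add: rot_param_def x4_def)
      ultimately have q: "rot_param k h s' v \<in> {p\<in>S. x4 p \<ge> H0}" by blast
      have "p = (\<lambda>(y1,y2,y3,y4). (y1, y2, y3, 2 * H0 - y4)) (rot_param k h s' v)"
        using sv s' by (simp add: rot_param_def)
      then show "p \<in> (\<lambda>(y1,y2,y3,y4). (y1, y2, y3, 2 * H0 - y4)) ` {p\<in>S. x4 p \<ge> H0}"
        using q by blast
    qed
  qed
  have embed: "\<forall>s\<in>{0..L}. \<forall>s'\<in>{0..L}. \<forall>v v'. \<psi> s v = \<psi> s' v' \<longrightarrow>
        s = s' \<and> (s = 0 \<or> s = L \<or> (\<exists>m::int. v' = v + 2 * pi * of_int m))"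
  proof (intro ballI allI impI)
    fix s s' v v' assume s: "s \<in> {0..L}" and s': "s' \<in> {0..L}" and e: "\<psi> s v = \<psi> s' v'"
    then have c: "cosh (k s) = cosh (k s')" "sinh (k s) * cos v = sinh (k s') * cos v'"
      "sinh (k s) * sin v = sinh (k s') * sin v'" "h s = h s'"
      unfolding \<psi>_def rot_param_def by auto
    have ss: "s = s'"
    proof (cases s s' rule: linorder_cases)
      case less then show ?thesis using hinc[OF less s s'] c(4) by simp
    next
      case greater then show ?thesis using hinc[OF greater s' s] c(4) by simp
    qed simp
    show "s = s' \<and> (s = 0 \<or> s = L \<or> (\<exists>m::int. v' = v + 2 * pi * of_int m))"
    proof (cases "s = 0 \<or> s = L")
      case False
      then have "s \<in> {0<..<L}" using s by auto
      then have sp: "sinh (k s) > 0" using kpos by auto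
      have "sin v' = sin v \<and> cos v' = cos v" using c(2,3) sp ss by auto
      then show ?thesis using ss sin_cos_eq_iff by blast
    qed (use ss in auto)
  qed
  show ?thesis
  proof (intro conjI)
    show "\<forall>s\<in>{0..L}. \<forall>s'\<in>{0..L}. \<forall>v v'. \<psi> s v = \<psi> s' v' \<longrightarrow>
        s = s' \<and> (s = 0 \<or> s = L \<or> (\<exists>m::int. v' = v + 2 * pi * of_int m))" by (rule embed)
    show "bij_betw (deriv k) {0..L} {-1..1}" using bij u_def by simp
    show "\<forall>s\<in>{0..L}. k s = arcosh (exp ((1 - (deriv k s)^2) / (2 * K)))" using kform u_def by simp
    show "\<exists>C. (\<forall>s\<in>{0..L}. h s = - (1 / K) * (LBINT w=ereal 1..ereal (deriv k s). hint K w) + C)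
          \<and> (let h0 = (1 / K) * (LBINT w=ereal (-1)..ereal 0. hint K w) + C
             in (\<lambda>(y1,y2,y3,y4). (y1, y2, y3, 2 * h0 - y4)) ` {p\<in>S. x4 p \<ge> h0}
                  = {p\<in>S. x4 p \<le> h0})"
    proof (intro exI[of _ "h 0"] conjI)
      show "\<forall>s\<in>{0..L}. h s = - (1 / K) * (LBINT w=ereal 1..ereal (deriv k s). hint K w) + h 0"
      proof
        fix s assume s: "s \<in> {0..L}"
        have "(LBINT w=ereal 1..ereal (deriv k s). hint K w) = - Gi (u s)"
          unfolding Gi_def u_def using hint_LBINT[OF Kpos] urange[OF s] u_def by auto
        then show "h s = - (1 / K) * (LBINT w=ereal 1..ereal (deriv k s). hint K w) + h 0"
          using hform[OF s] by simp
      qed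
      show "let h0 = (1 / K) * (LBINT w=ereal (-1)..ereal 0. hint K w) + h 0
             in (\<lambda>(y1,y2,y3,y4). (y1, y2, y3, 2 * h0 - y4)) ` {p\<in>S. x4 p \<ge> h0}
                  = {p\<in>S. x4 p \<le> h0}"
        unfolding Let_def hint_LBINT2[OF Kpos] using symm unfolding H0_def I0_def .
    qed
  qed
qed

end
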